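(* Let $p \geq 3$ be a prime and $x, y \in \mathbb{Z}$ with $x^2 - 2 = y^p$ and $y \neq -1$. Then: (1) if $y \not\equiv -1 \pmod p$, then $x \not\equiv \pm 1 \pmod p$; (2) if $y \equiv -1 \pmod p$, then $x \equiv \pm 1 \pmod{p^2}$, and more precisely $v_p((x-1)(x+1)) = v_p(y+1) + 1$.
   Context: $v_p$ denotes the $p$-adic valuation. *)

theory Defs
  imports "HOL-Number_Theory.Number_Theory"
begin

end

theory Submission imports Defs begin
lemma int_fermat:
  fixes y :: int assumes p: "prime p"
  shows "[y ^ p = y] (mod int p)"
proof -
  define a where "a = nat (y mod int p)"
  have p0: "p > 0" using p prime_gt_0_nat by blast
  have ia: "int a = y mod int p" using p0 unfolding a_def by simp
  have ya: "[y = int a] (mod int p)" using ia by (simp add: cong_def)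
  have "[int a ^ p = int a] (mod int p)"
  proof (cases "p dvd a")
    case True
    then have "int p dvd int a" by simp
    then have "[int a = 0] (mod int p)" by (simp add: cong_0_iff)
    moreover then have "[int a ^ p = 0 ^ p] (mod int p)" by (rule cong_pow)
    ultimately show ?thesis using p0 by (metis cong_sym cong_trans power_0_left not_gr0)
  next
    case False
    have "[a ^ (p - 1) = 1] (mod p)" using fermat_theorem[OF p False] .
    then have "[a ^ (p - 1) * a = 1 * a] (mod p)" by (rule cong_mult) simp
    then have "[a ^ p = a] (mod p)" using p0
      by (metis mult.commute power_eq_if not_gr0 mult_1)
    then show ?thesis by (metis cong_int_iff of_nat_power)
  qed
  moreover have "[y ^ p = int a ^ p] (mod int p)" using ya by (rule cong_pow)
  ultimately show ?thesis using ya by (meson cong_sym cong_trans)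
qed

lemma expand3:
  fixes t :: int
  shows "\<exists>c. (t - 1) ^ n = (-1) ^ n * (1 - int n * t + int (n choose 2) * t^2) + t^3 * c"
proof (induction n)
  case 0 then show ?case by (intro exI[of _ 0]) (simp add: numeral_2_eq_2)
next
  case (Suc n)
  then obtain c where c: "(t - 1) ^ n = (-1) ^ n * (1 - int n * t + int (n choose 2) * t^2) + t^3 * c" by blast
  have ch: "int (Suc n choose 2) = int (n choose 2) + int n"
    by (simp add: numeral_2_eq_2)
  have "(t - 1) ^ Suc n = (t-1) * ((-1) ^ n * (1 - int n * t + int (n choose 2) * t^2) + t^3 * c)"
    using c by simp
  also have "\<dots> = (-1) ^ Suc n * (1 - int (Suc n) * t + int (Suc n choose 2) * t^2) + t^3 * ((t-1)*c + (-1)^n * int (n choose 2))"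
    unfolding ch by (simp add: algebra_simps power2_eq_square power3_eq_cube)
  finally show ?case by blast
qed
theorem theorem2p3:
  fixes p :: nat and x y :: int
  assumes "prime p" and "p \<ge> 3"
    and "x^2 - 2 = y^p" and "y \<noteq> -1"
  shows "(\<not> [y = -1] (mod int p) \<longrightarrow>
            \<not> [x = 1] (mod int p) \<and> \<not> [x = -1] (mod int p))
       \<and> ([y = -1] (mod int p) \<longrightarrow>
            ([x = 1] (mod (int p)^2) \<or> [x = -1] (mod (int p)^2)) \<and>
            multiplicity (int p) ((x - 1) * (x + 1)) = multiplicity (int p) (y + 1) + 1)"
proof -
  define P where "P = int p"
  have Pp: "prime P" using assms(1) unfolding P_def by simp
  have P3: "P \<ge> 3" using assms(2) unfolding P_def by simp
  have key: "(x - 1) * (x + 1) = y ^ p + 1"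
    using assms(3) by (simp add: algebra_simps power2_eq_square)
  have part1: "\<not> [y = -1] (mod P) \<longrightarrow> \<not> [x = 1] (mod P) \<and> \<not> [x = -1] (mod P)"
  proof (intro impI)
    assume ny: "\<not> [y = -1] (mod P)"
    show "\<not> [x = 1] (mod P) \<and> \<not> [x = -1] (mod P)"
    proof (rule ccontr)
      assume "\<not> (\<not> [x = 1] (mod P) \<and> \<not> [x = -1] (mod P))"
      then have "P dvd (x - 1) \<or> P dvd (x + 1)" by (auto simp: cong_iff_dvd_diff)
      then have "P dvd (x - 1) * (x + 1)" by auto
      then have "P dvd y ^ p + 1" using key by simp
      moreover have "P dvd y ^ p - y" using int_fermat[OF assms(1), of y]
        unfolding P_def by (simp add: cong_iff_dvd_diff)
      ultimately have "P dvd (y ^ p + 1) - (y ^ p - y)" by (rule dvd_diff)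
      then have "P dvd y + 1" by (simp add: add.commute)
      then show False using ny by (simp add: cong_iff_dvd_diff)
    qed
  qed
  have part2: "[y = -1] (mod P) \<longrightarrow>
            ([x = 1] (mod P^2) \<or> [x = -1] (mod P^2)) \<and>
            multiplicity P ((x - 1) * (x + 1)) = multiplicity P (y + 1) + 1"
  proof (intro impI)
    assume hy: "[y = -1] (mod P)"
    define t where "t = y + 1"
    have Pt: "P dvd t" using hy unfolding t_def by (simp add: cong_iff_dvd_diff)
    then obtain s where s: "t = P * s" by blast
    have t0: "t \<noteq> 0" using assms(4) unfolding t_def by simp
    have op: "odd p" using assms(1) assms(2) prime_odd_nat[of p] by simp
    then obtain k where k: "p = 2 * k + 1" using oddE by blast
    have ch: "p choose 2 = p * k"
      using k by (simp add: choose_two)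
    obtain c where c: "(t - 1) ^ p = (-1) ^ p * (1 - int p * t + int (p choose 2) * t^2) + t^3 * c"
      using expand3 by blast
    have m1: "(-1::int) ^ p = -1" using op by simp
    define m where "m = s * s * c - int k * s"
    have ty: "y = t - 1" unfolding t_def by simp
    have "y ^ p + 1 = (t - 1) ^ p + 1" using ty by simp
    also have "\<dots> = - (1 - int p * t + int (p * k) * t^2) + t^3 * c + 1"
      using c m1 ch by simp
    also have "\<dots> = t * (P * (1 + P * m))"
      unfolding m_def P_def s P_def by (simp add: algebra_simps power2_eq_square power3_eq_cube)
    finally have fac: "y ^ p + 1 = t * (P * (1 + P * m))" .
    show "([x = 1] (mod P^2) \<or> [x = -1] (mod P^2)) \<and>
            multiplicity P ((x - 1) * (x + 1)) = multiplicity P (y + 1) + 1"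
    proof
      have P0: "P \<noteq> 0" using P3 by simp
      have nd: "\<not> P dvd (1 + P * m)"
      proof
        assume "P dvd 1 + P * m"
        then have "P dvd 1" by (simp add: dvd_add_left_iff)
        then show False using P3 by (simp add: zdvd_not_zless)
      qed
      then have u0: "1 + P * m \<noteq> 0" by auto
      have mu: "multiplicity P (1 + P * m) = 0" using nd by (rule not_dvd_imp_multiplicity_0)
      have pe: "prime_elem P" using Pp by (rule prime_imp_prime_elem)
      have ms: "multiplicity P P = 1" using pe P0 by (intro multiplicity_self) (auto simp: prime_elem_not_unit)
      have "multiplicity P ((x - 1) * (x + 1)) = multiplicity P (t * (P * (1 + P * m)))"
        using key fac by simp
      also have "\<dots> = multiplicity P t + (multiplicity P P + multiplicity P (1 + P * m))"
        using pe t0 P0 u0 by (simp add: prime_elem_multiplicity_mult_distrib)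
      also have "\<dots> = multiplicity P (y + 1) + 1" using ms mu t_def by simp
      finally show mult: "multiplicity P ((x - 1) * (x + 1)) = multiplicity P (y + 1) + 1" .
      have "multiplicity P t \<ge> 1" using Pt t0 pe by (intro multiplicity_geI) (auto simp: prime_elem_not_unit)
      then have "2 \<le> multiplicity P ((x - 1) * (x + 1))" using mult t_def by simp
      then have d2: "P^2 dvd (x - 1) * (x + 1)" by (rule multiplicity_dvd')
      have "\<not> (P dvd (x - 1) \<and> P dvd (x + 1))"
      proof
        assume "P dvd (x - 1) \<and> P dvd (x + 1)"
        then have "P dvd (x + 1) - (x - 1)" by (meson dvd_diff)
        moreover have "(x + 1) - (x - 1) = 2" by simp
        ultimately have "P dvd 2" by metis
        then show False using P3 using zdvd_imp_le[of P 2] by simp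
      qed
      note nn = this
      have "P^2 dvd (x - 1) \<or> P^2 dvd (x + 1)"
      proof (cases "P dvd (x - 1)")
        case False
        then have "coprime P (x - 1)" using Pp by (simp add: prime_imp_coprime)
        then have "coprime (P^2) (x - 1)" by simp
        then show ?thesis using d2 by (simp add: coprime_dvd_mult_right_iff)
      next
        case True
        then have "\<not> P dvd (x + 1)" using nn by blast
        then have "coprime P (x + 1)" using Pp by (simp add: prime_imp_coprime)
        then have "coprime (P^2) (x + 1)" by simp
        then show ?thesis using d2 by (simp add: coprime_dvd_mult_left_iff)
      qed
      then show "[x = 1] (mod P^2) \<or> [x = -1] (mod P^2)" by (simp add: cong_iff_dvd_diff)
    qed
  qed
  show ?thesis using part1 part2 unfolding P_def by blast
qed
end
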